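(* Let $(X,d)$ be a metric space and $\ell:X\to[0,+\infty)$ lower semicontinuous with $\inf_X\ell=0$. For $\lambda>0$ let $u_\lambda$ be the Perron solution of $(\mathcal{G}_\lambda)$. Then for every $\alpha>0$, $u_\lambda\to u_\alpha$ pointwise as $\lambda\to\alpha^-$.
   Context: Global slope: $G[u](x)=\sup_{y\neq x}\frac{(u(x)-u(y))_+}{d(x,y)}$ if $u(x)<+\infty$, $G[u](x)=+\infty$ otherwise. A solution of $(\mathcal{G}_\lambda)$ is a lower semicontinuous $u$ with $\inf_Xu=0$ and $\lambda u+G[u]=\ell$ on $X$; the Perron solution is the solution that is pointwise maximal among all solutions (it exists for every $\lambda>0$). *)

theory Defs
  imports "HOL-Analysis.Analysis"
begin

definition lsc :: "('a::topological_space \<Rightarrow> real) \<Rightarrow> bool" where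
  "lsc f \<longleftrightarrow> (\<forall>x. \<forall>t < f x. \<forall>\<^sub>F y in at x. t < f y)"

text \<open>Global slope G[u](x) = sup over y different from x of (u x - u y)_+ / d(x,y),
  valued in the extended reals (empty supremum read as 0).\<close>
definition global_slope :: "('a::metric_space \<Rightarrow> real) \<Rightarrow> 'a \<Rightarrow> ereal" where
  "global_slope u x = Sup (insert 0 ((\<lambda>y. ereal (max (u x - u y) 0 / dist x y)) ` {y. y \<noteq> x}))"

definition is_solution :: "('a::metric_space \<Rightarrow> real) \<Rightarrow> real \<Rightarrow> ('a \<Rightarrow> real) \<Rightarrow> bool" where
  "is_solution l lam u \<longleftrightarrow> lsc u \<and> (INF x. ereal (u x)) = 0 \<and>
     (\<forall>x. ereal (lam * u x) + global_slope u x = ereal (l x))"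

definition perron_solution :: "('a::metric_space \<Rightarrow> real) \<Rightarrow> real \<Rightarrow> ('a \<Rightarrow> real) \<Rightarrow> bool" where
  "perron_solution l lam u \<longleftrightarrow> is_solution l lam u \<and>
     (\<forall>v. is_solution l lam v \<longrightarrow> (\<forall>x. v x \<le> u x))"

end

theory Submission
  imports Defs
begin

definition subsol :: "('a::metric_space \<Rightarrow> real) \<Rightarrow> real \<Rightarrow> ('a \<Rightarrow> real) \<Rightarrow> bool" where
  "subsol l lam w \<longleftrightarrow> (\<forall>x. lam * w x \<le> l x \<and> (\<forall>y. w x - w y \<le> (l x - lam * w x) * dist x y))"

lemma slope_le_iff:
  "global_slope u x \<le> ereal c \<longleftrightarrow> 0 \<le> c \<and> (\<forall>y. y \<noteq> x \<longrightarrow> max (u x - u y) 0 / dist x y \<le> c)"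
  unfolding global_slope_def by (auto simp: Sup_le_iff)

lemma slope_nonneg: "0 \<le> global_slope u x"
  unfolding global_slope_def by (simp add: Sup_upper)

lemma slope_le_imp:
  assumes "global_slope u x \<le> ereal c" shows "u x - u y \<le> c * dist x y"
proof (cases "y = x")
  case False
  then have d: "dist x y > 0" by simp
  have "max (u x - u y) 0 / dist x y \<le> c" using assms False by (simp add: slope_le_iff)
  then have "max (u x - u y) 0 \<le> c * dist x y" using d by (simp add: divide_le_eq)
  then show ?thesis by linarith
qed simp

lemma subsol_slope:
  assumes "subsol l lam w" shows "global_slope w x \<le> ereal (l x - lam * w x)"
proof -
  have h: "0 \<le> l x - lam * w x" using assms by (simp add: subsol_def)
  have "max (w x - w y) 0 / dist x y \<le> l x - lam * w x" if "y \<noteq> x" for y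
  proof -
    have d: "dist x y > 0" using that by simp
    have "w x - w y \<le> (l x - lam * w x) * dist x y" using assms by (simp add: subsol_def)
    moreover have "0 \<le> (l x - lam * w x) * dist x y" using h by simp
    ultimately have "max (w x - w y) 0 \<le> (l x - lam * w x) * dist x y" by simp
    then show ?thesis using d by (simp add: divide_le_eq)
  qed
  then show ?thesis using h by (simp add: slope_le_iff)
qed

lemma solution_subsol:
  assumes "is_solution l lam u" shows "subsol l lam u"
  unfolding subsol_def
proof (intro allI)
  fix x
  have eq: "ereal (lam * u x) + global_slope u x = ereal (l x)" using assms by (simp add: is_solution_def)
  have "global_slope u x = ereal (l x - lam * u x)"
    using eq slope_nonneg[of u x]
    by (cases "global_slope u x") auto
  then have le: "global_slope u x \<le> ereal (l x - lam * u x)" by simp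
  then have "0 \<le> l x - lam * u x" by (simp add: slope_le_iff)
  then show "lam * u x \<le> l x \<and> (\<forall>y. u x - u y \<le> (l x - lam * u x) * dist x y)"
    using slope_le_imp[OF le] by simp
qed

lemma subsol_lsc:
  assumes "subsol l lam w" shows "lsc w"
  unfolding lsc_def
proof (intro allI impI)
  fix x t assume t: "t < w x"
  define c where "c = l x - lam * w x"
  have c: "0 \<le> c" using assms by (simp add: subsol_def c_def)
  have low: "w y \<ge> w x - c * dist x y" for y
    using assms unfolding subsol_def c_def by (metis diff_le_eq add.commute)
  show "\<forall>\<^sub>F y in at x. t < w y"
    unfolding eventually_at
  proof (intro exI[of _ "(w x - t) / (c + 1)"] conjI ballI impI)
    show "0 < (w x - t) / (c + 1)" using t c by simp
    fix y assume y: "y \<noteq> x \<and> dist y x < (w x - t) / (c + 1)"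
    then have "(c + 1) * dist x y < w x - t" using c by (simp add: dist_commute field_simps)
    moreover have "c * dist x y \<le> (c + 1) * dist x y" by (simp add: distrib_right)
    ultimately show "t < w y" using low[of y] by linarith
  qed
qed

lemma zero_subsol: "(\<And>x. l x \<ge> 0) \<Longrightarrow> subsol l lam (\<lambda>_. 0)"
  by (simp add: subsol_def)

lemma subsol_mono:
  assumes "subsol l mu w" "\<And>x. w x \<ge> 0" "0 < lam" "lam \<le> mu"
  shows "subsol l lam w"
  unfolding subsol_def
proof (intro allI conjI)
  fix x y
  have a: "lam * w x \<le> mu * w x" using assms by (simp add: mult_right_mono)
  then show "lam * w x \<le> l x" using assms(1) by (simp add: subsol_def) (smt (verit) a)
  have "w x - w y \<le> (l x - mu * w x) * dist x y" using assms(1) by (simp add: subsol_def)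
  also have "\<dots> \<le> (l x - lam * w x) * dist x y" using a by (simp add: mult_right_mono)
  finally show "w x - w y \<le> (l x - lam * w x) * dist x y" .
qed

lemma lim_le:
  fixes a c alpha :: real
  assumes "\<And>lam. 0 < lam \<Longrightarrow> lam < alpha \<Longrightarrow> lam * a \<le> c" "0 < alpha" "0 \<le> a"
  shows "alpha * a \<le> c"
proof (rule ccontr)
  assume "\<not> alpha * a \<le> c"
  then have ac: "c < alpha * a" by simp
  then have a: "a > 0" using assms(1)[of "alpha/2"] assms(2,3) by (cases "a = 0") auto
  have ca: "c / a < alpha" using ac a by (simp add: divide_less_eq mult.commute)
  define q where "q = max 0 (c/a)"
  have m: "c/a \<le> q" "0 \<le> q" "q < alpha" using ca assms(2) unfolding q_def by auto
  define lam where "lam = (alpha + q) / 2"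
  have "0 < lam" using m assms(2) unfolding lam_def by (simp add: field_simps)
  have "lam < alpha" using m assms(2) unfolding lam_def by (simp add: field_simps)
  have gen: "\<And>r. r \<le> q \<Longrightarrow> r < (alpha + q) / 2" using m by (simp add: field_simps)
  have "c / a < lam" unfolding lam_def by (rule gen[OF m(1)])
  then have "c < lam * a" using a by (simp add: divide_less_eq)
  with assms(1)[OF \<open>0 < lam\<close> \<open>lam < alpha\<close>] show False by simp
qed


lemma max_subsol:
  fixes l :: "'a::metric_space \<Rightarrow> real"
  assumes l_nonneg: "\<And>x. l x \<ge> 0" and l_lsc: "lsc l" and l_inf: "(INF x. ereal (l x)) = 0"
    and lam: "lam > 0" and perron: "perron_solution l lam u" and w: "subsol l lam w"
  shows "w x \<le> u x"
proof -
  define S where "S = {v. subsol l lam v}"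
  define W where "W = (\<lambda>x. SUP v\<in>S. v x)"
  have zero: "(\<lambda>_. 0) \<in> S" using zero_subsol[of l lam] l_nonneg by (simp add: S_def)
  have Sne: "S \<noteq> {}" using zero by auto
  have ub: "v x \<le> l x / lam" if "v \<in> S" for v x
  proof -
    have "lam * v x \<le> l x" using that by (simp add: S_def subsol_def)
    then show ?thesis using lam by (simp add: pos_le_divide_eq mult.commute)
  qed
  have bdd: "bdd_above ((\<lambda>v. v x) ` S)" for x
    using ub by (intro bdd_aboveI[of _ "l x / lam"]) auto
  have upper: "v x \<le> W x" if "v \<in> S" for v x
    unfolding W_def using that bdd by (rule cSUP_upper)
  have Wnn: "0 \<le> W x" for x using upper[OF zero] by simp
  have Wsub: "subsol l lam W"
    unfolding subsol_def
  proof (intro allI conjI)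
    fix x y
    have "W x \<le> l x / lam" unfolding W_def using Sne ub by (intro cSUP_least) auto
    then show "lam * W x \<le> l x" using lam by (simp add: pos_le_divide_eq mult.commute)
    have dpos: "0 < 1 + lam * dist x y" using lam by (simp add: add_pos_nonneg)
    have Wx: "W x = (SUP v\<in>S. v x)" by (simp add: W_def)
    have "W x \<le> (W y + l x * dist x y) / (1 + lam * dist x y)"
      unfolding Wx
    proof (rule cSUP_least[OF Sne])
      fix v assume v: "v \<in> S"
      have "v x - v y \<le> (l x - lam * v x) * dist x y" using v by (simp add: S_def subsol_def)
      then have "v x * (1 + lam * dist x y) \<le> v y + l x * dist x y"
        by (simp add: algebra_simps)
      also have "\<dots> \<le> W y + l x * dist x y" using upper[OF v] by simp
      finally show "v x \<le> (W y + l x * dist x y) / (1 + lam * dist x y)"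
        using dpos by (simp add: pos_le_divide_eq)
    qed
    then have "W x * (1 + lam * dist x y) \<le> W y + l x * dist x y"
      using dpos by (simp add: pos_le_divide_eq)
    then show "W x - W y \<le> (l x - lam * W x) * dist x y" by (simp add: algebra_simps)
  qed
  have Winf: "(INF x. ereal (W x)) = 0"
  proof (rule antisym)
    show "0 \<le> (INF x. ereal (W x))" using Wnn by (intro INF_greatest) simp
    show "(INF x. ereal (W x)) \<le> 0"
    proof (rule ccontr)
      assume "\<not> (INF x. ereal (W x)) \<le> 0"
      then have "0 < (INF x. ereal (W x))" by simp
      then obtain c where c: "0 < ereal c" "ereal c < (INF x. ereal (W x))" using ereal_dense2 by blast
      have "c < W x" for x
      proof -
        have "ereal c < ereal (W x)" using c(2) INF_lower[of x UNIV "\<lambda>x. ereal (W x)"] by (rule less_le_trans) simp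
        then show ?thesis by simp
      qed
      then have "lam * c < l x" for x
        using ub[OF _] Wsub lam
        by (smt (verit, best) mult_strict_left_mono subsol_def)
      then have "ereal (lam * c) \<le> (INF x. ereal (l x))" by (intro INF_greatest) (simp add: less_imp_le)
      then have "lam * c \<le> 0" using l_inf by simp
      moreover have "0 < lam * c" using c(1) lam by simp
      ultimately show False by simp
    qed
  qed
  have Wsol: "is_solution l lam W"
    unfolding is_solution_def
  proof (intro conjI allI)
    show "lsc W" using Wsub by (rule subsol_lsc)
    show "(INF x. ereal (W x)) = 0" by (rule Winf)
    fix x0
    define h where "h = l x0 - lam * W x0"
    have le: "global_slope W x0 \<le> ereal h" unfolding h_def by (rule subsol_slope[OF Wsub])
    have "global_slope W x0 = ereal h"
    proof (rule antisym[OF le], rule ccontr)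
      assume "\<not> ereal h \<le> global_slope W x0"
      then have "global_slope W x0 < ereal h" by simp
      then obtain g where g1: "global_slope W x0 < ereal g" and g2: "ereal g < ereal h"
        using ereal_dense2 by blast
      have gh: "g < h" using g2 by simp
      have g1': "global_slope W x0 \<le> ereal g" using g1 by simp
      have g0: "0 \<le> g" using g1' unfolding slope_le_iff by simp
      have gW: "W x0 - W y \<le> g * dist x0 y" for y using g1 by (intro slope_le_imp) simp
      define \<delta> where "\<delta> = (h - g) / 3"
      have dpos: "\<delta> > 0" using gh by (simp add: \<delta>_def)
      have "l x0 - \<delta> < l x0" using dpos by simp
      then have "\<forall>\<^sub>F z in at x0. l x0 - \<delta> < l z" using l_lsc by (simp add: lsc_def)
      then obtain r where r: "r > 0" and rr: "\<And>z. z \<noteq> x0 \<Longrightarrow> dist z x0 < r \<Longrightarrow> l x0 - \<delta> < l z"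
        unfolding eventually_at by auto
      have lnear: "l x0 - \<delta> < l z" if "dist z x0 < r" for z
        using rr[OF _ that] dpos by (cases "z = x0") auto
      define m where "m = min (\<delta> / lam) (r * \<delta>)"
      have m0: "0 < m" using dpos lam r by (simp add: m_def)
      have m1: "m \<le> \<delta> / lam" "m \<le> r * \<delta>" by (simp_all add: m_def)
      define \<epsilon> where "\<epsilon> = m / 2"
      have half: "\<And>A. A \<ge> m \<Longrightarrow> m / 2 < A" using m0 by (simp add: field_simps)
      have epos: "\<epsilon> > 0" using m0 by (simp add: \<epsilon>_def)
      have e1: "lam * \<epsilon> \<le> \<delta>"
      proof -
        have "\<epsilon> \<le> \<delta> / lam" using half[OF m1(1)] by (simp add: \<epsilon>_def)
        then show ?thesis using lam by (simp add: pos_le_divide_eq mult.commute)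
      qed
      have e2: "\<epsilon> < r * \<delta>" using half[OF m1(2)] by (simp add: \<epsilon>_def)
      define k where "k = h - \<delta> - lam * \<epsilon>"
      have kg: "g + \<delta> \<le> k" using e1 unfolding k_def \<delta>_def by (simp add: field_simps)
      define \<phi> where "\<phi> = (\<lambda>z. W x0 + \<epsilon> - k * dist z x0)"
      define W' where "W' = (\<lambda>z. max (W z) (\<phi> z))"
      have W'sub: "subsol l lam W'"
        unfolding subsol_def
      proof (intro allI)
        fix z
        show "lam * W' z \<le> l z \<and> (\<forall>y. W' z - W' y \<le> (l z - lam * W' z) * dist z y)"
        proof (cases "\<phi> z \<le> W z")
          case True
          then have eq: "W' z = W z" by (simp add: W'_def)
          have "W' y \<ge> W y" for y by (simp add: W'_def)
          then show ?thesis using Wsub unfolding eq subsol_def by (smt (verit))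
        next
          case False
          then have eq: "W' z = \<phi> z" by (simp add: W'_def)
          have d0: "0 \<le> dist z x0" by simp
          have "W x0 - W z \<le> g * dist z x0" using gW[of z] by (simp add: dist_commute)
          then have "(k - g) * dist z x0 < \<epsilon>" using False unfolding \<phi>_def by (simp add: algebra_simps)
          moreover have "\<delta> * dist z x0 \<le> (k - g) * dist z x0" using kg d0 by (intro mult_right_mono) auto
          ultimately have "\<delta> * dist z x0 < r * \<delta>" using e2 by linarith
          then have near: "dist z x0 < r" using dpos by (simp add: mult.commute)
          have lz: "l x0 - \<delta> < l z" by (rule lnear[OF near])
          have k0: "0 \<le> k" using kg g0 dpos by linarith
          have "\<phi> z \<le> W x0 + \<epsilon>" using k0 d0 unfolding \<phi>_def by simp
          then have "lam * \<phi> z \<le> lam * (W x0 + \<epsilon>)" using lam by (intro mult_left_mono) auto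
          then have "lam * \<phi> z \<le> lam * W x0 + lam * \<epsilon>" by (simp add: distrib_left)
          then have key: "k \<le> l z - lam * \<phi> z" using lz unfolding k_def h_def by linarith
          show ?thesis unfolding eq
          proof (intro conjI allI)
            show "lam * \<phi> z \<le> l z" using key k0 by linarith
            fix y
            have "\<phi> z - W' y \<le> \<phi> z - \<phi> y" by (simp add: W'_def)
            also have "\<dots> = k * (dist y x0 - dist z x0)" by (simp add: \<phi>_def algebra_simps)
            also have "\<dots> \<le> k * dist z y"
              using k0 dist_triangle[of y x0 z] by (intro mult_left_mono) (auto simp: dist_commute)
            also have "\<dots> \<le> (l z - lam * \<phi> z) * dist z y" using key by (intro mult_right_mono) auto
            finally show "\<phi> z - W' y \<le> (l z - lam * \<phi> z) * dist z y" .
          qed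
        qed
      qed
      have "W' x0 \<le> W x0" using upper[of W' x0] W'sub by (simp add: S_def)
      moreover have "W' x0 \<ge> W x0 + \<epsilon>" by (simp add: W'_def \<phi>_def)
      ultimately show False using epos by linarith
    qed
    then show "ereal (lam * W x0) + global_slope W x0 = ereal (l x0)" by (simp add: h_def)
  qed
  have "W x \<le> u x" using perron Wsol by (simp add: perron_solution_def)
  moreover have "w x \<le> W x" using upper w by (simp add: S_def)
  ultimately show ?thesis by simp
qed


theorem proposition5p8:
  fixes l :: "'a::metric_space \<Rightarrow> real"
    and u :: "real \<Rightarrow> 'a \<Rightarrow> real"
  assumes l_nonneg: "\<And>x. l x \<ge> 0"
    and l_lsc: "lsc l"
    and l_inf: "(INF x. ereal (l x)) = 0"
    and u_perron: "\<And>lam. lam > 0 \<Longrightarrow> perron_solution l lam (u lam)"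
    and alpha: "alpha > 0"
  shows "\<forall>x. ((\<lambda>lam. u lam x) \<longlongrightarrow> u alpha x) (at_left alpha)"
proof
  fix x
  have sub_le: "w y \<le> u lam y" if "lam > 0" "subsol l lam w" for lam w y
    using max_subsol[OF l_nonneg l_lsc l_inf that(1) u_perron[OF that(1)] that(2)] .
  have sol: "subsol l lam (u lam)" if "lam > 0" for lam
    using u_perron[OF that] by (intro solution_subsol) (simp add: perron_solution_def)
  have nn: "0 \<le> u lam y" if "lam > 0" for lam y
    using sub_le[OF that zero_subsol[of l lam]] l_nonneg by simp
  have mono: "u mu y \<le> u lam y" if "0 < lam" "lam \<le> mu" for lam mu y
  proof -
    have "mu > 0" using that by simp
    have "subsol l lam (u mu)" using sol[OF \<open>mu > 0\<close>] nn[OF \<open>mu > 0\<close>] that by (rule subsol_mono)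
    then show ?thesis by (rule sub_le[OF that(1)])
  qed
  define I where "I = {0<..<alpha}"
  have "alpha / 2 \<in> I" using alpha by (simp add: I_def)
  then have Ine: "I \<noteq> {}" by blast
  define v where "v = (\<lambda>y. INF mu\<in>I. u mu y)"
  have bdd: "bdd_below ((\<lambda>mu. u mu y) ` I)" for y
    using nn by (intro bdd_belowI[of _ 0]) (auto simp: I_def)
  have v_le: "v y \<le> u mu y" if "mu \<in> I" for mu y
    unfolding v_def using bdd[of y] that by (rule cINF_lower)
  have v_ge: "u alpha y \<le> v y" for y
    unfolding v_def using Ine by (rule cINF_greatest) (auto simp: I_def intro: mono)
  have vnn: "0 \<le> v y" for y using v_ge[of y] nn[OF alpha, of y] by simp
  have vsub: "subsol l alpha v"
    unfolding subsol_def
  proof (intro allI conjI)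
    fix z y
    have "lam * v z \<le> l z" if "0 < lam" "lam < alpha" for lam
    proof -
      have "lam * v z \<le> lam * u lam z" using v_le[of lam z] that by (intro mult_left_mono) (auto simp: I_def)
      also have "\<dots> \<le> l z" using sol[OF that(1)] by (simp add: subsol_def)
      finally show ?thesis .
    qed
    then show "alpha * v z \<le> l z" using lim_le[where a="v z" and c="l z" and alpha=alpha] alpha vnn by simp
    have d0: "0 \<le> dist z y" by simp
    have "lam * (v z * dist z y) \<le> v y - v z + l z * dist z y" if "0 < lam" "lam < alpha" for lam
    proof -
      have vy: "v y = (INF mu\<in>I. u mu y)" by (simp add: v_def)
      have "v z + lam * (v z * dist z y) - l z * dist z y \<le> v y"
        unfolding vy
      proof (rule cINF_greatest[OF Ine])
        fix mu assume mu: "mu \<in> I"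
        define m where "m = max lam mu"
        have mI: "m \<in> I" using mu that by (auto simp: I_def m_def)
        have m0: "0 < m" "lam \<le> m" "mu \<le> m" using that by (auto simp: m_def)
        have "u m z - u m y \<le> (l z - m * u m z) * dist z y" using sol[OF m0(1)] by (simp add: subsol_def)
        then have A: "u m z + m * (u m z * dist z y) - l z * dist z y \<le> u m y" by (simp add: algebra_simps)
        have B: "v z \<le> u m z" using v_le[OF mI] .
        have C: "m * (v z * dist z y) \<le> m * (u m z * dist z y)"
          using B m0 d0 by (intro mult_left_mono mult_right_mono) auto
        have D: "lam * (v z * dist z y) \<le> m * (v z * dist z y)"
          using m0 vnn[of z] d0 by (intro mult_right_mono) auto
        have E: "u m y \<le> u mu y" using mono[of mu m y] mu m0 by (auto simp: I_def)
        show "v z + lam * (v z * dist z y) - l z * dist z y \<le> u mu y" using A B C D E by linarith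
      qed
      then show ?thesis by simp
    qed
    then have "alpha * (v z * dist z y) \<le> v y - v z + l z * dist z y"
      using lim_le[where a="v z * dist z y" and c="v y - v z + l z * dist z y" and alpha=alpha] alpha vnn[of z] d0 by simp
    then show "v z - v y \<le> (l z - alpha * v z) * dist z y" by (simp add: algebra_simps)
  qed
  have veq: "v x = u alpha x" using sub_le[OF alpha vsub] v_ge[of x] by (simp add: antisym)
  show "((\<lambda>lam. u lam x) \<longlongrightarrow> u alpha x) (at_left alpha)"
    unfolding tendsto_iff
  proof (intro allI impI)
    fix e :: real assume e: "e > 0"
    have "v x < u alpha x + e" using veq e by simp
    then obtain lam0 where l0: "lam0 \<in> I" and l0x: "u lam0 x < u alpha x + e"
      unfolding v_def using cINF_less_iff[OF Ine bdd] by blast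
    have "0 < lam0" "lam0 < alpha" using l0 by (auto simp: I_def)
    then have ev: "\<forall>\<^sub>F lam in at_left alpha. lam \<in> {lam0<..<alpha}" by (intro eventually_at_left_real)
    show "\<forall>\<^sub>F lam in at_left alpha. dist (u lam x) (u alpha x) < e"
    proof (rule eventually_mono[OF ev])
      fix lam assume lam: "lam \<in> {lam0<..<alpha}"
      have a: "u lam x \<le> u lam0 x" using mono[of lam0 lam x] \<open>0 < lam0\<close> lam by auto
      have b: "u alpha x \<le> u lam x" using mono[of lam alpha x] \<open>0 < lam0\<close> lam by auto
      show "dist (u lam x) (u alpha x) < e" using a b l0x by (simp add: dist_real_def)
    qed
  qed
qed

end
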